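(* Under the setup below, for every $1\le i\le n-1$ and $1\le j\le D_i$, put $r_i=(d_i/d_{i+1})^{1/D_i}$ and $\widetilde w_{i,j}=r_ia_i\exp\!\big(\pi\mathrm{i}\tfrac{2j-1}{D_i}\big)$. Then there is a critical point $w_{i,j}\in\mathbb{C}\setminus\{0\}$ of $f$, i.e. a solution of $$\sum_{k=1}^{n-1}\frac{(-1)^{n-k}D_kz^{D_k}}{z^{D_k}-a_k^{D_k}}+(-1)^nd_1=0,$$ with $|w_{i,j}-\widetilde w_{i,j}|<u^{2/K}|a_i|$. Moreover $w_{i_1,j_1}=w_{i_2,j_2}$ if and only if $(i_1,j_1)=(i_2,j_2)$.
   Context: Setup. Fix $p\in\{0,1\}$, $n\ge2$ and positive integers $d_1,\dots,d_n$ with $\xi:=\sum_{i=1}^n 1/d_i<1$; let $K=\max_i d_i$ and $D_i=d_i+d_{i+1}$ ($1\le i\le n-1$). If $p=1$: $0<s\le\min\{K^{-5\xi/(1-\xi)},K^{5-2K}\}$, $u=sK^{-5}$, $v=sK^{-2}$. If $p=0$: $0<s\le\min\{2^{-(1-\xi)^{-1}(1+1/d_n-2\xi/3)^{-1}},(4K)^{-3/(1-\xi)},K^{-2K(1+1/d_n+2(1-\xi)/3)^{-1}}\}$, $u=s^{1+1/d_n+2(1-\xi)/3}$, $v=s^{1/d_n+(1-\xi)/3}$. Let $a_1,\dots,a_{n-1}\in\mathbb{C}$ with $|a_{n-1}|=v^{1/d_n}$ and $|a_i|=u^{1/d_{i+1}}|a_{i+1}|$ for $1\le i\le n-2$. Let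 $f=f_{p,d_1,\dots,d_n}$, where $$f_{p,d_1,\dots,d_n}(z)=z^{(-1)^{n-p}d_1}\prod_{i=1}^{n-1}\big(z^{D_i}-a_i^{D_i}\big)^{(-1)^{n-i-p}}.$$ *)

theory Defs
  imports "HOL-Analysis.Analysis"
begin

definition DD :: "(nat \<Rightarrow> nat) \<Rightarrow> nat \<Rightarrow> nat" where
  "DD d i = d i + d (Suc i)"

definition crit_eq :: "nat \<Rightarrow> (nat \<Rightarrow> nat) \<Rightarrow> (nat \<Rightarrow> complex) \<Rightarrow> complex \<Rightarrow> bool" where
  "crit_eq n d a z \<longleftrightarrow>
     (\<forall>k\<in>{1..n-1}. z ^ DD d k \<noteq> a k ^ DD d k) \<and>
     (\<Sum>k=1..n-1. (-1) ^ (n - k) * of_nat (DD d k) * z ^ DD d k / (z ^ DD d k - a k ^ DD d k))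
       + (-1) ^ n * of_nat (d 1) = 0"

end

theory Submission
  imports Defs
begin


lemma exp_m1_bound:
  fixes z :: complex assumes "cmod z \<le> 1/2"
  shows "cmod (exp z - 1) \<le> 2 * cmod z"
proof -
  have "cmod (exp z - (\<Sum>i\<le>0. z ^ i / fact i)) \<le> exp (cmod z) * (cmod z ^ Suc 0) / fact 0"
    by (rule Taylor_exp_field)
  hence "cmod (exp z - 1) \<le> exp (cmod z) * cmod z" by simp
  also have "\<dots> \<le> 2 * cmod z"
  proof (rule mult_right_mono)
    have "exp (cmod z) \<le> exp (1/2)" using assms by simp
    also have "\<dots> \<le> 2" by (rule exp_half_le2)
    finally show "exp (cmod z) \<le> 2" .
  qed simp
  finally show ?thesis .
qed

lemma frac_bound:
  fixes X Y :: complex assumes "cmod X \<le> cmod Y / 2" "Y \<noteq> 0"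
  shows "X - Y \<noteq> 0" "cmod (X / (X - Y)) \<le> 2 * cmod X / cmod Y"
proof -
  have "cmod Y - cmod X \<le> cmod (X - Y)" by (metis norm_minus_commute norm_triangle_ineq2)
  hence h: "cmod Y / 2 \<le> cmod (X - Y)" using assms by linarith
  thus nz: "X - Y \<noteq> 0" using assms by auto
  have "cmod (X / (X - Y)) = cmod X / cmod (X - Y)" by (simp add: norm_divide)
  also have "\<dots> \<le> cmod X / (cmod Y / 2)"
    by (rule divide_left_mono[OF h]) (use assms nz in auto)
  also have "\<dots> = 2 * cmod X / cmod Y" by simp
  finally show "cmod (X / (X - Y)) \<le> 2 * cmod X / cmod Y" .
qed

lemma key_tau:
  fixes u g \<beta> :: real and K dm dO :: nat
  assumes u0: "0 < u" and uK: "u \<le> real K powr (- 2 * real K)" and K1: "1 \<le> K"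
    and dm: "2 \<le> dm" "dm \<le> K" and dO: "2 \<le> dO"
    and b0: "0 \<le> \<beta>" and bg: "\<beta> \<le> g * u powr (1 / real dm)"
    and g0: "0 \<le> g" and gD: "g ^ (dm + dO) \<le> 2 * real K powr (real K / 2)"
  shows "\<beta> ^ (dm + dO) \<le> 2 * u powr (3/4 + 2 / real K)"
proof -
  have u1: "u \<le> 1"
  proof -
    have g1: "1 \<le> real K powr (2 * real K)" using K1 by (intro ge_one_powr_ge_zero) auto
    have "real K powr (- 2 * real K) = inverse (real K powr (2 * real K))"
      by (simp add: powr_minus[symmetric])
    also have "\<dots> \<le> 1" using g1 by (metis inverse_1 le_imp_inverse_le zero_less_one)
    finally have "real K powr (- 2 * real K) \<le> 1" .
    thus ?thesis using uK by linarith
  qed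
  have "\<beta> ^ (dm + dO) \<le> (g * u powr (1 / real dm)) ^ (dm + dO)"
    by (rule power_mono[OF bg b0])
  also have "\<dots> = g ^ (dm + dO) * u powr (real (dm + dO) / real dm)"
    using u0 dm by (simp add: power_mult_distrib powr_realpow[symmetric] powr_powr)
  also have "\<dots> \<le> (2 * real K powr (real K / 2)) * u powr (1 + 2 / real K)"
  proof (rule mult_mono[OF gD])
    have "1 + 2 / real K \<le> 1 + real dO / real dm"
    proof -
      have "2 / real K \<le> 2 / real dm" using dm by (intro divide_left_mono) auto
      also have "\<dots> \<le> real dO / real dm" using dO dm by (intro divide_right_mono) auto
      finally show ?thesis by simp
    qed
    also have "\<dots> = real (dm + dO) / real dm" using dm by (simp add: field_simps)
    finally show "u powr (real (dm + dO) / real dm) \<le> u powr (1 + 2 / real K)"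
      using u0 u1 by (intro powr_mono') auto
  qed auto
  also have "\<dots> \<le> (2 * u powr (-1/4)) * u powr (1 + 2 / real K)"
  proof (rule mult_right_mono)
    have "real K powr (real K / 2) = (real K powr (- 2 * real K)) powr (-1/4)"
      by (simp add: powr_powr)
    also have "\<dots> \<le> u powr (-1/4)"
      using u0 uK by (intro powr_mono2') auto
    finally show "2 * real K powr (real K / 2) \<le> 2 * u powr (-1/4)" by simp
  qed auto
  also have "\<dots> = 2 * u powr (3/4 + 2 / real K)"
    using u0 by (simp add: powr_add[symmetric])
  finally show ?thesis .
qed

lemma upow_bound:
  fixes u x :: real and K :: nat
  assumes u0: "0 < u" and uK: "u \<le> real K powr (- 2 * real K)" and K1: "1 \<le> K" and x0: "0 \<le> x"
  shows "u powr (x / real K) \<le> real K powr (- 2 * x)"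
proof -
  have "u powr (x / real K) \<le> (real K powr (- 2 * real K)) powr (x / real K)"
    using u0 uK x0 K1 by (intro powr_mono2) auto
  also have "\<dots> = real K powr (- 2 * x)" using K1 by (simp add: powr_powr)
  finally show ?thesis .
qed

lemma bound_total:
  fixes u :: real and K n :: nat
  assumes u0: "0 < u" and uK: "u \<le> real K powr (- 2 * real K)" and K3: "3 \<le> K"
    and nK: "n < K" and n2: "2 \<le> n"
  shows "24 * real K ^ 2 * real (n - 2) * u powr (3/4) \<le> 1"
proof (cases "n = 2")
  case True thus ?thesis by simp
next
  case False
  hence K4: "4 \<le> K" using nK n2 by linarith
  have "u powr (3/4) = u powr ((3 * real K / 4) / real K)" using K4 by simp
  also have "\<dots> \<le> real K powr (- 2 * (3 * real K / 4))"
    using u0 uK K4 by (intro upow_bound) auto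
  also have "\<dots> \<le> real K powr (- 6)"
    using K4 by (intro powr_mono) auto
  also have "\<dots> = 1 / real K ^ 6" using K4 by (simp add: powr_neg_numeral)
  finally have up: "u powr (3/4) \<le> 1 / real K ^ 6" .
  have "24 * real K ^ 2 * real (n - 2) * u powr (3/4) \<le> 24 * real K ^ 2 * real K * (1 / real K ^ 6)"
    using up nK by (intro mult_mono) auto
  also have "\<dots> = 24 / real K ^ 3" using K4 by (simp add: field_simps power_eq_if)
  also have "\<dots> \<le> 24 / 4 ^ 3" using K4 by (intro divide_left_mono power_mono) auto
  also have "\<dots> \<le> 1" by simp
  finally show ?thesis .
qed

lemma tele:
  fixes d :: "nat \<Rightarrow> nat"
  shows "(\<Sum>k=1..m. (-1::complex) ^ (Suc m + k) * of_nat (DD d k)) + (-1) ^ Suc m * of_nat (d 1)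
     = - of_nat (d (Suc m))"
proof (induction m)
  case 0 thus ?case by simp
next
  case (Suc m)
  let ?S = "\<Sum>k=1..m. (-1::complex) ^ (Suc m + k) * of_nat (DD d k)"
  have e1: "(\<Sum>k=1..Suc m. (-1::complex) ^ (Suc (Suc m) + k) * of_nat (DD d k))
     = - ?S + (-1) ^ (Suc (Suc m) + Suc m) * of_nat (DD d (Suc m))"
    by (simp add: sum_negf[symmetric])
  have e2: "(-1::complex) ^ (Suc (Suc m) + Suc m) = -1"
    by (simp add: power_add[symmetric] power_mult_distrib)
  have e3: "(-1::complex) ^ Suc (Suc m) * of_nat (d 1) = - ((-1) ^ Suc m * of_nat (d 1))" by simp
  have "(\<Sum>k=1..Suc m. (-1::complex) ^ (Suc (Suc m) + k) * of_nat (DD d k)) + (-1) ^ Suc (Suc m) * of_nat (d 1)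
      = - (?S + (-1) ^ Suc m * of_nat (d 1)) - of_nat (DD d (Suc m))"
    unfolding e1 e2 e3 by (simp add: algebra_simps)
  also have "\<dots> = of_nat (d (Suc m)) - of_nat (DD d (Suc m))" using Suc.IH by simp
  also have "\<dots> = - of_nat (d (Suc (Suc m)))" by (simp add: DD_def)
  finally show ?case .
qed

lemma rho_pos:
  fixes a :: "nat \<Rightarrow> complex" and d :: "nat \<Rightarrow> nat"
  assumes u0: "0 < u" and alast: "0 < cmod (a (n - 1))"
    and arel: "\<forall>i\<in>{1..n-2}. cmod (a i) = u powr (1 / real (d (Suc i))) * cmod (a (Suc i))"
    and k: "1 \<le> k" "k \<le> n - 1"
  shows "0 < cmod (a k)"
proof -
  have "\<forall>m. m \<le> n - 2 \<longrightarrow> 0 < cmod (a (n - 1 - m))"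
  proof (intro allI)
    fix m show "m \<le> n - 2 \<longrightarrow> 0 < cmod (a (n - 1 - m))"
    proof (induction m)
      case 0 thus ?case using alast by simp
    next
      case (Suc m)
      show ?case
      proof
        assume h: "Suc m \<le> n - 2"
        hence "n - 1 - Suc m \<in> {1..n-2}" by auto
        hence "cmod (a (n - 1 - Suc m)) = u powr (1 / real (d (Suc (n - 1 - Suc m)))) * cmod (a (Suc (n - 1 - Suc m)))"
          using arel by blast
        moreover have "Suc (n - 1 - Suc m) = n - 1 - m" using h by auto
        ultimately show "0 < cmod (a (n - 1 - Suc m))" using Suc h u0 by simp
      qed
    qed
  qed
  moreover have "n - 1 - k \<le> n - 2" using k by auto
  ultimately have "0 < cmod (a (n - 1 - (n - 1 - k)))" by blast
  moreover have "n - 1 - (n - 1 - k) = k" using k by auto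
  ultimately show ?thesis by simp
qed

lemma rho_mono:
  fixes a :: "nat \<Rightarrow> complex" and d :: "nat \<Rightarrow> nat"
  assumes u0: "0 < u" and u1: "u \<le> 1"
    and arel: "\<forall>i\<in>{1..n-2}. cmod (a i) = u powr (1 / real (d (Suc i))) * cmod (a (Suc i))"
    and k: "1 \<le> k" "k \<le> l" "l \<le> n - 1"
  shows "cmod (a k) \<le> cmod (a l)"
proof -
  have "l \<le> n - 1 \<longrightarrow> cmod (a k) \<le> cmod (a l)"
    using k(2)
  proof (induction l rule: dec_induct)
    case base thus ?case by simp
  next
    case (step l)
    show ?case
    proof
      assume h: "Suc l \<le> n - 1"
      hence "l \<in> {1..n-2}" using k step by auto
      hence e: "cmod (a l) = u powr (1 / real (d (Suc l))) * cmod (a (Suc l))" using arel by blast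
      have "u powr (1 / real (d (Suc l))) \<le> 1" using u0 u1 by (intro powr_le1) auto
      hence "cmod (a l) \<le> cmod (a (Suc l))" unfolding e by (simp add: mult_left_le_one_le)
      thus "cmod (a k) \<le> cmod (a (Suc l))" using step h by simp
    qed
  qed
  thus ?thesis using k by simp
qed

definition Err :: "nat \<Rightarrow> (nat \<Rightarrow> nat) \<Rightarrow> (nat \<Rightarrow> complex) \<Rightarrow> nat \<Rightarrow> complex \<Rightarrow> complex" where
  "Err n d a i z = (\<Sum>k=1..i-1. (-1) ^ (i + k) * (of_nat (DD d k) * (a k ^ DD d k / (z ^ DD d k - a k ^ DD d k))))
     + (\<Sum>k=Suc i..n-1. (-1) ^ (i + k) * (of_nat (DD d k) * (z ^ DD d k / (z ^ DD d k - a k ^ DD d k))))"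

lemma sgn_pow:
  assumes "even (a + b)" shows "(-1::complex) ^ a = (-1) ^ b"
  using assms by (simp add: minus_one_power_iff)

lemma decomp:
  fixes z :: complex and a :: "nat \<Rightarrow> complex" and d :: "nat \<Rightarrow> nat"
  assumes i: "1 \<le> i" "i \<le> n - 1"
    and nz: "\<forall>k\<in>{1..n-1}. z ^ DD d k \<noteq> a k ^ DD d k"
  shows "(-1) ^ (n - i) * ((\<Sum>k=1..n-1. (-1) ^ (n - k) * of_nat (DD d k) * z ^ DD d k / (z ^ DD d k - a k ^ DD d k))
           + (-1) ^ n * of_nat (d 1))
     = of_nat (DD d i) * z ^ DD d i / (z ^ DD d i - a i ^ DD d i) - of_nat (d i) + Err n d a i z"
proof -
  define t where "t k = of_nat (DD d k) * (z ^ DD d k / (z ^ DD d k - a k ^ DD d k))" for k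
  have L: "(-1) ^ (n - i) * ((\<Sum>k=1..n-1. (-1) ^ (n - k) * of_nat (DD d k) * z ^ DD d k / (z ^ DD d k - a k ^ DD d k))
           + (-1) ^ n * of_nat (d 1))
     = (\<Sum>k=1..n-1. (-1) ^ (i + k) * t k) + (-1) ^ i * of_nat (d 1)"
  proof -
    have "(-1::complex) ^ (n - i) * (-1) ^ n = (-1) ^ i"
      unfolding power_add[symmetric] using i by (intro sgn_pow) auto
    moreover have "(-1) ^ (n - i) * (\<Sum>k=1..n-1. (-1) ^ (n - k) * of_nat (DD d k) * z ^ DD d k / (z ^ DD d k - a k ^ DD d k))
        = (\<Sum>k=1..n-1. (-1) ^ (i + k) * t k)"
      unfolding sum_distrib_left
    proof (rule sum.cong)
      fix k assume k: "k \<in> {1..n-1}"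
      have "(-1::complex) ^ (n - i) * (-1) ^ (n - k) = (-1) ^ (i + k)"
        unfolding power_add[symmetric] using i k by (intro sgn_pow) auto
      thus "(-1) ^ (n - i) * ((-1) ^ (n - k) * of_nat (DD d k) * z ^ DD d k / (z ^ DD d k - a k ^ DD d k))
          = (-1) ^ (i + k) * t k"
        unfolding t_def by (simp add: algebra_simps)
    qed simp
    ultimately show ?thesis by (simp add: algebra_simps)
  qed
  have split: "(\<Sum>k=1..n-1. (-1) ^ (i + k) * t k)
      = (\<Sum>k=1..i-1. (-1) ^ (i + k) * t k) + (-1) ^ (i + i) * t i + (\<Sum>k=Suc i..n-1. (-1) ^ (i + k) * t k)"
  proof -
    have "(\<Sum>k=1..n-1. (-1) ^ (i + k) * t k) = (\<Sum>k=1..i + (n - 1 - i). (-1) ^ (i + k) * t k)"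
      using i by simp
    also have "\<dots> = (\<Sum>k=1..i. (-1) ^ (i + k) * t k) + (\<Sum>k=i+1..i + (n - 1 - i). (-1) ^ (i + k) * t k)"
      by (rule sum.ub_add_nat) (use i in simp)
    also have "(\<Sum>k=1..i. (-1) ^ (i + k) * t k) = (\<Sum>k=1..i-1. (-1) ^ (i + k) * t k) + (-1) ^ (i + i) * t i"
    proof -
      obtain m where m: "i = Suc m" using i by (cases i) auto
      show ?thesis unfolding m by (simp add: sum.cl_ivl_Suc del: power_Suc)
    qed
    also have "i + (n - 1 - i) = n - 1" using i by simp
    finally show ?thesis by simp
  qed
  have low: "(\<Sum>k=1..i-1. (-1) ^ (i + k) * t k) = (\<Sum>k=1..i-1. (-1) ^ (i + k) * of_nat (DD d k))
      + (\<Sum>k=1..i-1. (-1) ^ (i + k) * (of_nat (DD d k) * (a k ^ DD d k / (z ^ DD d k - a k ^ DD d k))))"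
    unfolding sum.distrib[symmetric]
  proof (rule sum.cong)
    fix k assume k: "k \<in> {1..i-1}"
    hence "z ^ DD d k - a k ^ DD d k \<noteq> 0" using nz i by auto
    hence "z ^ DD d k / (z ^ DD d k - a k ^ DD d k) = 1 + a k ^ DD d k / (z ^ DD d k - a k ^ DD d k)"
      by (simp add: field_simps)
    thus "(-1) ^ (i + k) * t k = (-1) ^ (i + k) * of_nat (DD d k)
      + (-1) ^ (i + k) * (of_nat (DD d k) * (a k ^ DD d k / (z ^ DD d k - a k ^ DD d k)))"
      unfolding t_def by (simp add: algebra_simps)
  qed simp
  have tl: "(\<Sum>k=1..i-1. (-1::complex) ^ (i + k) * of_nat (DD d k)) + (-1) ^ i * of_nat (d 1) = - of_nat (d i)"
    using tele[of "i - 1" d] i by simp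
  have ii: "(-1::complex) ^ (i + i) = 1" by (simp add: power_add[symmetric] flip: mult_2)
  show ?thesis unfolding L split low Err_def ii
    using tl unfolding t_def by (simp add: algebra_simps)
qed

lemma c_facts:
  fixes d :: "nat \<Rightarrow> nat" and a :: "nat \<Rightarrow> complex" and K i j :: nat
  assumes di: "2 \<le> d i" "d i \<le> K" and di1: "2 \<le> d (Suc i)" "d (Suc i) \<le> K" and j: "1 \<le> j"
  defines "r \<equiv> (real (d i) / real (d (Suc i))) powr (1 / real (DD d i))"
  defines "c \<equiv> complex_of_real r * a i
              * exp (complex_of_real pi * \<i> * of_real ((2 * real j - 1) / real (DD d i)))"
  shows "0 < r" "r ^ DD d i = real (d i) / real (d (Suc i))"
    "real K powr (-1/4) \<le> r" "r \<le> real K powr (1/4)"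
    "cmod c = r * cmod (a i)"
    "c ^ DD d i = - (of_nat (d i) / of_nat (d (Suc i))) * a i ^ DD d i"
proof -
  define D where "D = DD d i"
  have D4: "4 \<le> D" using di di1 by (simp add: D_def DD_def)
  define x where "x = real (d i) / real (d (Suc i))"
  have x0: "0 < x" using di di1 by (simp add: x_def)
  have xK: "x \<le> real K"
  proof -
    have "x \<le> real (d i) / 1" unfolding x_def using di di1 by (intro divide_left_mono) auto
    thus ?thesis using di by simp
  qed
  have xK': "1 / real K \<le> x"
  proof -
    have "1 / real K \<le> 1 / real (d (Suc i))" using di1 by (intro divide_left_mono) auto
    also have "\<dots> \<le> x" unfolding x_def using di di1 by (intro divide_right_mono) auto
    finally show ?thesis .
  qed
  have K1: "1 \<le> real K" using di by simp
  show r0: "0 < r" unfolding r_def using di di1 by simp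
  show rD: "r ^ DD d i = real (d i) / real (d (Suc i))"
  proof -
    have "r ^ D = r powr real D" using r0 by (simp add: powr_realpow)
    also have "\<dots> = x powr (1 / real D * real D)" unfolding r_def x_def D_def by (simp add: powr_powr)
    also have "\<dots> = x" using D4 x0 by simp
    finally show ?thesis unfolding D_def x_def .
  qed
  show "r \<le> real K powr (1/4)"
  proof -
    have "r \<le> real K powr (1 / real D)" unfolding r_def D_def[symmetric] x_def[symmetric]
      using x0 xK by (intro powr_mono2) auto
    also have "\<dots> \<le> real K powr (1/4)" using K1 D4 by (intro powr_mono) (auto simp: field_simps)
    finally show ?thesis .
  qed
  show "real K powr (-1/4) \<le> r"
  proof -
    have "real K powr (-1/4) \<le> real K powr (- 1 / real D)" using K1 D4 by (intro powr_mono) (auto simp: field_simps)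
    also have "\<dots> = (1 / real K) powr (1 / real D)" using K1 by (simp add: powr_divide powr_minus_divide)
    also have "\<dots> \<le> r" unfolding r_def D_def[symmetric] x_def[symmetric]
      using x0 xK' K1 by (intro powr_mono2) auto
    finally show ?thesis .
  qed
  have "cmod (exp (complex_of_real pi * \<i> * of_real ((2 * real j - 1) / real (DD d i)))) = 1"
    by (metis norm_exp_i_times mult.commute mult.assoc of_real_mult)
  thus "cmod c = r * cmod (a i)" unfolding c_def using r0 by (simp add: norm_mult)
  have ex: "exp (complex_of_real pi * \<i> * of_real ((2 * real j - 1) / real (DD d i))) ^ DD d i = -1"
  proof -
    have "exp (complex_of_real pi * \<i> * of_real ((2 * real j - 1) / real D)) ^ D
        = exp (of_nat D * (complex_of_real pi * \<i> * of_real ((2 * real j - 1) / real D)))"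
      by (rule exp_of_nat_mult[symmetric])
    also have "of_nat D * (complex_of_real pi * \<i> * of_real ((2 * real j - 1) / real D))
        = of_nat (2 * j - 1) * (complex_of_real pi * \<i>)"
      using D4 j by (simp add: of_nat_diff field_simps)
    also have "exp \<dots> = exp (complex_of_real pi * \<i>) ^ (2 * j - 1)" by (rule exp_of_nat_mult)
    also have "\<dots> = -1" using j by (simp add: minus_one_power_iff)
    finally show ?thesis unfolding D_def .
  qed
  show "c ^ DD d i = - (of_nat (d i) / of_nat (d (Suc i))) * a i ^ DD d i"
    unfolding c_def power_mult_distrib ex of_real_power[symmetric] rD by simp
qed

lemma h_bounds:
  fixes \<eta> :: real and D :: nat
  assumes "0 \<le> \<eta>" "real D * \<eta> \<le> 1/2" "\<eta> \<le> 1/2"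
  shows "(1 / (1 - \<eta>)) ^ D \<le> 2" "(1 + \<eta>) ^ D \<le> 2"
proof -
  have "1 + real D * (- \<eta>) \<le> (1 + (- \<eta>)) ^ D"
    by (rule Bernoulli_inequality) (use assms in \<open>auto simp: algebra_simps\<close>)
  hence b: "1/2 \<le> (1 - \<eta>) ^ D" using assms by simp
  have "(1 / (1 - \<eta>)) ^ D = 1 / (1 - \<eta>) ^ D" by (simp add: power_divide)
  also have "\<dots> \<le> 1 / (1/2)" using b by (intro divide_left_mono) auto
  finally show "(1 / (1 - \<eta>)) ^ D \<le> 2" by simp
  have "(1 + \<eta>) ^ D \<le> exp \<eta> ^ D"
    using assms by (intro power_mono) (auto simp: add.commute)
  also have "\<dots> = exp (real D * \<eta>)" by (simp add: exp_of_nat_mult)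
  also have "\<dots> \<le> exp (1/2)" using assms by simp
  also have "\<dots> \<le> 2" by (rule exp_half_le2)
  finally show "(1 + \<eta>) ^ D \<le> 2" .
qed

lemma gD_bound:
  fixes h y :: real and D K :: nat
  assumes "0 \<le> h" "h ^ D \<le> 2" "0 < y" "y \<le> real K powr (1/4)" "D \<le> 2 * K" "1 \<le> K"
  shows "(h * y) ^ D \<le> 2 * real K powr (real K / 2)"
proof -
  have "(h * y) ^ D = h ^ D * y ^ D" by (simp add: power_mult_distrib)
  also have "\<dots> \<le> 2 * (real K powr (1/4)) ^ D"
    using assms by (intro mult_mono power_mono) auto
  also have "(real K powr (1/4)) ^ D = real K powr (real D / 4)"
    using assms by (simp add: powr_realpow[symmetric] powr_powr)
  also have "\<dots> \<le> real K powr (real K / 2)" using assms by (intro powr_mono) auto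
  finally show ?thesis by simp
qed

lemma term_low:
  fixes a :: "nat \<Rightarrow> complex" and d :: "nat \<Rightarrow> nat" and z :: complex
  assumes u0: "0 < u" and uK: "u \<le> real K powr (- 2 * real K)" and K1: "1 \<le> K"
    and dk: "2 \<le> d k" "d k \<le> K" and dk1: "2 \<le> d (Suc k)" "d (Suc k) \<le> K"
    and \<rho>0: "0 < \<rho>" and ak: "cmod (a k) \<le> u powr (1 / real (d (Suc k))) * \<rho>"
    and r0: "0 < r" and rK: "real K powr (-1/4) \<le> r"
    and \<eta>: "0 \<le> \<eta>" "real (2 * K) * \<eta> \<le> 1/2"
    and zl: "(1 - \<eta>) * r * \<rho> \<le> cmod z"
    and us: "2 * u powr (3/4 + 2 / real K) \<le> 1/2"
  shows "z ^ DD d k \<noteq> a k ^ DD d k"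
    "cmod (a k ^ DD d k / (z ^ DD d k - a k ^ DD d k)) \<le> 4 * u powr (3/4 + 2 / real K)"
proof -
  have \<eta>h: "\<eta> \<le> 1/2"
  proof -
    have "\<eta> * 1 \<le> \<eta> * real (2 * K)" using K1 \<eta> by (intro mult_left_mono) auto
    thus ?thesis using \<eta> by (simp add: algebra_simps)
  qed
  hence \<eta>1: "\<eta> < 1" by simp
  have z0: "0 < cmod z" using zl \<eta>1 r0 \<rho>0
    by (smt (verit, best) mult_pos_pos)
  define g where "g = 1 / ((1 - \<eta>) * r)"
  have g0: "0 \<le> g" using \<eta>1 r0 by (simp add: g_def)
  have bg: "cmod (a k) / cmod z \<le> g * u powr (1 / real (d (Suc k)))"
  proof -
    have "cmod (a k) / cmod z \<le> (u powr (1 / real (d (Suc k))) * \<rho>) / ((1 - \<eta>) * r * \<rho>)"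
      using ak zl z0 \<eta>1 r0 \<rho>0 by (intro frac_le) auto
    also have "\<dots> = g * u powr (1 / real (d (Suc k)))" using \<rho>0 by (simp add: g_def)
    finally show ?thesis .
  qed
  have gD: "g ^ (d (Suc k) + d k) \<le> 2 * real K powr (real K / 2)"
  proof -
    have gg: "g = (1 / (1 - \<eta>)) * (1 / r)" by (simp add: g_def)
    have h1: "(1 / (1 - \<eta>)) ^ (d (Suc k) + d k) \<le> 2"
    proof (rule h_bounds(1))
      show "real (d (Suc k) + d k) * \<eta> \<le> 1/2"
        using \<eta> dk dk1 by (smt (verit) mult_right_mono of_nat_add of_nat_le_iff add_mono mult_2)
    qed (use \<eta> \<eta>h in auto)
    have h2: "1 / r \<le> real K powr (1/4)"
    proof -
      have "1 / r \<le> 1 / real K powr (-1/4)" using rK r0 K1 by (intro divide_left_mono) auto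
      moreover have "real K powr (-1/4) * real K powr (1/4) = 1" using K1 by (simp add: powr_add[symmetric])
      hence "1 / real K powr (-1/4) = real K powr (1/4)" using K1 by (simp add: field_simps)
      ultimately show ?thesis by simp
    qed
    show ?thesis unfolding gg by (rule gD_bound[OF _ h1 _ h2]) (use r0 \<eta>1 dk dk1 K1 in auto)
  qed
  have tau: "(cmod (a k) / cmod z) ^ (d (Suc k) + d k) \<le> 2 * u powr (3/4 + 2 / real K)"
    by (rule key_tau[OF u0 uK K1 dk1 dk(1) _ bg g0 gD]) simp
  have DDk: "DD d k = d (Suc k) + d k" by (simp add: DD_def)
  have rat: "cmod (a k ^ DD d k) / cmod (z ^ DD d k) \<le> 2 * u powr (3/4 + 2 / real K)"
    using tau unfolding DDk by (simp add: norm_power power_divide)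
  have zD0: "0 < cmod (z ^ DD d k)" using z0 by (simp add: norm_power)
  have X: "cmod (a k ^ DD d k) \<le> cmod (z ^ DD d k) / 2"
  proof -
    have "cmod (a k ^ DD d k) \<le> 2 * u powr (3/4 + 2 / real K) * cmod (z ^ DD d k)"
      using rat zD0 by (simp add: divide_le_eq)
    also have "\<dots> \<le> 1/2 * cmod (z ^ DD d k)" using us by (intro mult_right_mono) auto
    finally show ?thesis by simp
  qed
  have zD: "z ^ DD d k \<noteq> 0" using zD0 by auto
  note fb = frac_bound[OF X zD]
  show "z ^ DD d k \<noteq> a k ^ DD d k" using fb(1) by auto
  have "cmod (a k ^ DD d k / (z ^ DD d k - a k ^ DD d k)) = cmod (a k ^ DD d k / (a k ^ DD d k - z ^ DD d k))"
    by (metis minus_diff_eq minus_divide_right norm_minus_cancel)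
  also have "\<dots> \<le> 2 * cmod (a k ^ DD d k) / cmod (z ^ DD d k)" by (rule fb(2))
  also have "\<dots> \<le> 4 * u powr (3/4 + 2 / real K)" using rat by simp
  finally show "cmod (a k ^ DD d k / (z ^ DD d k - a k ^ DD d k)) \<le> 4 * u powr (3/4 + 2 / real K)" .
qed

lemma term_high:
  fixes a :: "nat \<Rightarrow> complex" and d :: "nat \<Rightarrow> nat" and z :: complex
  assumes u0: "0 < u" and uK: "u \<le> real K powr (- 2 * real K)" and K1: "1 \<le> K"
    and dk: "2 \<le> d k" "d k \<le> K" and dk1: "2 \<le> d (Suc k)" "d (Suc k) \<le> K"
    and \<rho>0: "0 < \<rho>" and ak0: "0 < cmod (a k)" and ak: "\<rho> \<le> u powr (1 / real (d k)) * cmod (a k)"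
    and r0: "0 < r" and rK: "r \<le> real K powr (1/4)"
    and \<eta>: "0 \<le> \<eta>" "real (2 * K) * \<eta> \<le> 1/2"
    and zu: "cmod z \<le> (1 + \<eta>) * r * \<rho>"
    and us: "2 * u powr (3/4 + 2 / real K) \<le> 1/2"
  shows "z ^ DD d k \<noteq> a k ^ DD d k"
    "cmod (z ^ DD d k / (z ^ DD d k - a k ^ DD d k)) \<le> 4 * u powr (3/4 + 2 / real K)"
proof -
  have \<eta>h: "\<eta> \<le> 1/2"
  proof -
    have "\<eta> * 1 \<le> \<eta> * real (2 * K)" using K1 \<eta> by (intro mult_left_mono) auto
    thus ?thesis using \<eta> by (simp add: algebra_simps)
  qed
  define g where "g = (1 + \<eta>) * r"
  have g0: "0 \<le> g" using \<eta> r0 by (simp add: g_def)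
  have bg: "cmod z / cmod (a k) \<le> g * u powr (1 / real (d k))"
  proof -
    have "cmod z / cmod (a k) \<le> ((1 + \<eta>) * r * (u powr (1 / real (d k)) * cmod (a k))) / cmod (a k)"
      using zu ak ak0 \<eta> r0 by (intro divide_right_mono) (auto intro!: order_trans[OF zu] mult_left_mono)
    also have "\<dots> = g * u powr (1 / real (d k))" using ak0 by (simp add: g_def)
    finally show ?thesis .
  qed
  have gD: "g ^ (d k + d (Suc k)) \<le> 2 * real K powr (real K / 2)"
  proof -
    have h1: "(1 + \<eta>) ^ (d k + d (Suc k)) \<le> 2"
    proof (rule h_bounds(2))
      show "real (d k + d (Suc k)) * \<eta> \<le> 1/2"
        using \<eta> dk dk1 by (smt (verit) mult_right_mono of_nat_add of_nat_le_iff add_mono mult_2)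
    qed (use \<eta> \<eta>h in auto)
    show ?thesis unfolding g_def by (rule gD_bound[OF _ h1 _ rK]) (use r0 \<eta> dk dk1 K1 in auto)
  qed
  have tau: "(cmod z / cmod (a k)) ^ (d k + d (Suc k)) \<le> 2 * u powr (3/4 + 2 / real K)"
    by (rule key_tau[OF u0 uK K1 dk dk1(1) _ bg g0 gD]) simp
  have DDk: "DD d k = d k + d (Suc k)" by (simp add: DD_def)
  have rat: "cmod (z ^ DD d k) / cmod (a k ^ DD d k) \<le> 2 * u powr (3/4 + 2 / real K)"
    using tau unfolding DDk by (simp add: norm_power power_divide)
  have aD0: "0 < cmod (a k ^ DD d k)" using ak0 by (simp add: norm_power)
  have X: "cmod (z ^ DD d k) \<le> cmod (a k ^ DD d k) / 2"
  proof -
    have "cmod (z ^ DD d k) \<le> 2 * u powr (3/4 + 2 / real K) * cmod (a k ^ DD d k)"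
      using rat aD0 by (simp add: divide_le_eq)
    also have "\<dots> \<le> 1/2 * cmod (a k ^ DD d k)" using us by (intro mult_right_mono) auto
    finally show ?thesis by simp
  qed
  have aD: "a k ^ DD d k \<noteq> 0" using aD0 by auto
  note fb = frac_bound[OF X aD]
  show "z ^ DD d k \<noteq> a k ^ DD d k" using fb(1) by auto
  have "cmod (z ^ DD d k / (z ^ DD d k - a k ^ DD d k)) \<le> 2 * cmod (z ^ DD d k) / cmod (a k ^ DD d k)" by (rule fb(2))
  also have "\<dots> \<le> 4 * u powr (3/4 + 2 / real K)" using rat by simp
  finally show "cmod (z ^ DD d k / (z ^ DD d k - a k ^ DD d k)) \<le> 4 * u powr (3/4 + 2 / real K)" .
qed

lemma err_bound:
  fixes a :: "nat \<Rightarrow> complex" and d :: "nat \<Rightarrow> nat" and z :: complex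
  assumes n2: "2 \<le> n" and dge: "\<forall>i\<in>{1..n}. 2 \<le> d i \<and> d i \<le> K" and K1: "1 \<le> K"
    and u0: "0 < u" and uK: "u \<le> real K powr (- 2 * real K)" and u1: "u \<le> 1"
    and apos: "\<forall>k\<in>{1..n-1}. 0 < cmod (a k)"
    and arel: "\<forall>i\<in>{1..n-2}. cmod (a i) = u powr (1 / real (d (Suc i))) * cmod (a (Suc i))"
    and i: "1 \<le> i" "i \<le> n - 1"
    and r0: "0 < r" and rK1: "real K powr (-1/4) \<le> r" and rK2: "r \<le> real K powr (1/4)"
    and \<eta>: "0 \<le> \<eta>" "real (2 * K) * \<eta> \<le> 1/2"
    and zl: "(1 - \<eta>) * r * cmod (a i) \<le> cmod z"
    and zu: "cmod z \<le> (1 + \<eta>) * r * cmod (a i)"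
    and us: "2 * u powr (3/4 + 2 / real K) \<le> 1/2"
  shows "\<forall>k\<in>{1..n-1}-{i}. z ^ DD d k \<noteq> a k ^ DD d k"
    "cmod (Err n d a i z) \<le> real (n - 2) * (real (2 * K) * (4 * u powr (3/4 + 2 / real K)))"
proof -
  define T where "T = 4 * u powr (3/4 + 2 / real K)"
  have \<rho>0: "0 < cmod (a i)" using apos i by auto
  have low: "z ^ DD d k \<noteq> a k ^ DD d k \<and> cmod (a k ^ DD d k / (z ^ DD d k - a k ^ DD d k)) \<le> T"
    if k: "k \<in> {1..i-1}" for k
  proof -
    have k1: "k \<in> {1..n-2}" using k i by auto
    have "cmod (a (Suc k)) \<le> cmod (a i)" using k i by (intro rho_mono[OF u0 u1 arel]) auto
    hence ak: "cmod (a k) \<le> u powr (1 / real (d (Suc k))) * cmod (a i)"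
      using arel k1 by (simp add: mult_left_mono)
    have dd: "2 \<le> d k" "d k \<le> K" "2 \<le> d (Suc k)" "d (Suc k) \<le> K" using dge k i by auto
    show ?thesis unfolding T_def
      using term_low[where d=d and k=k and a=a and z=z, OF u0 uK K1 dd \<rho>0 ak r0 rK1 \<eta> zl us] by blast
  qed
  have high: "z ^ DD d k \<noteq> a k ^ DD d k \<and> cmod (z ^ DD d k / (z ^ DD d k - a k ^ DD d k)) \<le> T"
    if k: "k \<in> {Suc i..n-1}" for k
  proof -
    have k1: "k - 1 \<in> {1..n-2}" using k i by auto
    have "cmod (a i) \<le> cmod (a (k - 1))" using k i by (intro rho_mono[OF u0 u1 arel]) auto
    moreover have "cmod (a (k - 1)) = u powr (1 / real (d k)) * cmod (a k)"
    proof -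
      have sk: "Suc (k - 1) = k" using k i by auto
      have "cmod (a (k - 1)) = u powr (1 / real (d (Suc (k - 1)))) * cmod (a (Suc (k - 1)))"
        using arel k1 by blast
      thus ?thesis unfolding sk .
    qed
    ultimately have ak: "cmod (a i) \<le> u powr (1 / real (d k)) * cmod (a k)" by simp
    have ak0: "0 < cmod (a k)" using apos k i by auto
    have dd: "2 \<le> d k" "d k \<le> K" "2 \<le> d (Suc k)" "d (Suc k) \<le> K" using dge k i by auto
    show ?thesis unfolding T_def
      using term_high[where d=d and k=k and a=a and z=z, OF u0 uK K1 dd \<rho>0 ak0 ak r0 rK2 \<eta> zu us] by blast
  qed
  show "\<forall>k\<in>{1..n-1}-{i}. z ^ DD d k \<noteq> a k ^ DD d k"
  proof
    fix k assume "k \<in> {1..n-1}-{i}"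
    hence "k \<in> {1..i-1} \<or> k \<in> {Suc i..n-1}" by auto
    thus "z ^ DD d k \<noteq> a k ^ DD d k" using low high by blast
  qed
  have DK: "real (DD d k) \<le> real (2 * K)" if "k \<in> {1..n-1}" for k
  proof -
    have "d k \<le> K" "d (Suc k) \<le> K" using dge that by auto
    thus ?thesis by (simp add: DD_def)
  qed
  have s1: "cmod (\<Sum>k=1..i-1. (-1) ^ (i + k) * (of_nat (DD d k) * (a k ^ DD d k / (z ^ DD d k - a k ^ DD d k))))
      \<le> (\<Sum>k=1..i-1. real (2 * K) * T)"
  proof (rule sum_norm_le)
    fix k assume k: "k \<in> {1..i-1}"
    have "cmod ((-1) ^ (i + k) * (of_nat (DD d k) * (a k ^ DD d k / (z ^ DD d k - a k ^ DD d k))))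
        = real (DD d k) * cmod (a k ^ DD d k / (z ^ DD d k - a k ^ DD d k))" unfolding norm_mult norm_power by simp
    also have "\<dots> \<le> real (2 * K) * T" using low[OF k] DK[of k] k i
      by (intro mult_mono) (auto simp: T_def)
    finally show "cmod ((-1) ^ (i + k) * (of_nat (DD d k) * (a k ^ DD d k / (z ^ DD d k - a k ^ DD d k)))) \<le> real (2 * K) * T" .
  qed
  have s2: "cmod (\<Sum>k=Suc i..n-1. (-1) ^ (i + k) * (of_nat (DD d k) * (z ^ DD d k / (z ^ DD d k - a k ^ DD d k))))
      \<le> (\<Sum>k=Suc i..n-1. real (2 * K) * T)"
  proof (rule sum_norm_le)
    fix k assume k: "k \<in> {Suc i..n-1}"
    have "cmod ((-1) ^ (i + k) * (of_nat (DD d k) * (z ^ DD d k / (z ^ DD d k - a k ^ DD d k))))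
        = real (DD d k) * cmod (z ^ DD d k / (z ^ DD d k - a k ^ DD d k))" unfolding norm_mult norm_power by simp
    also have "\<dots> \<le> real (2 * K) * T" using high[OF k] DK[of k] k i
      by (intro mult_mono) (auto simp: T_def)
    finally show "cmod ((-1) ^ (i + k) * (of_nat (DD d k) * (z ^ DD d k / (z ^ DD d k - a k ^ DD d k)))) \<le> real (2 * K) * T" .
  qed
  have "cmod (Err n d a i z) \<le> (\<Sum>k=1..i-1. real (2 * K) * T) + (\<Sum>k=Suc i..n-1. real (2 * K) * T)"
    unfolding Err_def by (rule order_trans[OF norm_triangle_ineq add_mono[OF s1 s2]])
  also have "\<dots> = (real (i - 1) + real (n - 1 - i)) * (real (2 * K) * T)"
    by (simp add: algebra_simps)
  also have "real (i - 1) + real (n - 1 - i) = real (n - 2)" using i by auto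
  finally show "cmod (Err n d a i z) \<le> real (n - 2) * (real (2 * K) * (4 * u powr (3/4 + 2 / real K)))"
    unfolding T_def .
qed

lemma root_algebra:
  fixes Z A E w cD :: complex and p q :: nat
  assumes p: "0 < p" and q: "0 < q" and A: "A \<noteq> 0"
    and cD: "cD = - (of_nat p / of_nat q) * A" and Z: "Z = cD * (1 + w)"
    and w: "w = E * (Z - A) / (of_nat p * A)" and Rew: "-1 < Re w"
  shows "Z \<noteq> A" "of_nat (p + q) * Z / (Z - A) - of_nat p + E = 0"
proof -
  show ZA: "Z \<noteq> A"
  proof
    assume "Z = A"
    hence "- (of_nat p / of_nat q) * A * (1 + w) = A" using Z cD by simp
    hence "- (of_nat p / of_nat q) * (1 + w) = 1" using A
      by (metis mult.commute mult.left_commute mult_cancel_left2)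
    moreover have "1 + w = - (of_nat q / of_nat p) * (- (of_nat p / of_nat q) * (1 + w))"
      using p q by (simp add: field_simps)
    ultimately have "1 + w = - (of_nat q / of_nat p)" by simp
    hence "Re (1 + w) = - (real q / real p)" by simp
    moreover have "0 < real q / real p" using p q by simp
    ultimately show False using Rew by simp
  qed
  have e1: "E * (Z - A) = w * (of_nat p * A)" using w A p by simp
  have e2: "of_nat q * Z = - of_nat p * A * (1 + w)" using Z cD q by simp
  have "of_nat (p + q) * Z / (Z - A) - of_nat p + E
      = (of_nat q * Z + of_nat p * A + E * (Z - A)) / (Z - A)"
    using ZA by (simp add: field_simps)
  also have "of_nat q * Z + of_nat p * A + E * (Z - A) = 0"
    unfolding e1 e2 by (simp add: algebra_simps)
  finally show "of_nat (p + q) * Z / (Z - A) - of_nat p + E = 0" by simp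
qed



lemma root_exists:
  fixes a :: "nat \<Rightarrow> complex" and d :: "nat \<Rightarrow> nat" and n K i j :: nat and u :: real
  assumes n2: "2 \<le> n" and dge: "\<forall>i\<in>{1..n}. 2 \<le> d i \<and> d i \<le> K" and nK: "n < K" and K3: "3 \<le> K"
    and u0: "0 < u" and uK: "u \<le> real K powr (- 2 * real K)"
    and apos: "\<forall>k\<in>{1..n-1}. 0 < cmod (a k)"
    and arel: "\<forall>i\<in>{1..n-2}. cmod (a i) = u powr (1 / real (d (Suc i))) * cmod (a (Suc i))"
    and i: "1 \<le> i" "i \<le> n - 1" and j: "1 \<le> j" "j \<le> DD d i"
  defines "c \<equiv> complex_of_real ((real (d i) / real (d (Suc i))) powr (1 / real (DD d i))) * a i
              * exp (complex_of_real pi * \<i> * of_real ((2 * real j - 1) / real (DD d i)))"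
  shows "\<exists>z L. z \<noteq> 0 \<and> crit_eq n d a z \<and> cmod (z - c) < u powr (2 / real K) * cmod (a i)
     \<and> real K powr (-1/4) / 2 * cmod (a i) \<le> cmod z \<and> cmod z \<le> 2 * real K powr (1/4) * cmod (a i)
     \<and> z = c * exp (L / of_nat (DD d i)) \<and> cmod L \<le> 1"
proof -
  define r where "r = (real (d i) / real (d (Suc i))) powr (1 / real (DD d i))"
  define D where "D = DD d i"
  define \<rho> where "\<rho> = cmod (a i)"
  define A where "A = a i ^ D"
  define \<delta> where "\<delta> = u powr (2 / real K)"
  define \<eta> where "\<eta> = \<delta> / (2 * real K)"
  define R where "R = \<eta> * r * \<rho>"
  have K1: "1 \<le> K" using K3 by simp
  have di: "2 \<le> d i" "d i \<le> K" "2 \<le> d (Suc i)" "d (Suc i) \<le> K" using dge i by auto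
  have D4: "4 \<le> D" using di by (simp add: D_def DD_def)
  note cf1 = c_facts(1-4)[where d=d and i=i and j=j and K=K, OF di j(1), folded r_def]
  note cf2 = c_facts(5,6)[where a=a and d=d and i=i and j=j and K=K, OF di j(1), folded r_def c_def]
  have r0: "0 < r" and rK1: "real K powr (-1/4) \<le> r" and rK2: "r \<le> real K powr (1/4)"
    and rD: "r ^ D = real (d i) / real (d (Suc i))"
    using cf1 by (simp_all add: D_def)
  have cn: "cmod c = r * \<rho>" and cD: "c ^ D = - (of_nat (d i) / of_nat (d (Suc i))) * A"
    using cf2 by (simp_all add: \<rho>_def A_def D_def)
  have \<rho>0: "0 < \<rho>" using apos i by (simp add: \<rho>_def)
  have A0: "A \<noteq> 0" using \<rho>0 by (auto simp: A_def \<rho>_def)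
  have u1: "u \<le> 1"
  proof -
    have g1: "1 \<le> real K powr (2 * real K)" using K1 by (intro ge_one_powr_ge_zero) auto
    have "real K powr (- 2 * real K) = inverse (real K powr (2 * real K))"
      by (simp add: powr_minus[symmetric])
    also have "\<dots> \<le> 1" using g1 by (metis inverse_1 le_imp_inverse_le zero_less_one)
    finally show ?thesis using uK by linarith
  qed
  have \<delta>0: "0 < \<delta>" using u0 by (simp add: \<delta>_def)
  have \<delta>1: "\<delta> \<le> 1/81"
  proof -
    have "\<delta> \<le> real K powr (- 2 * 2)" unfolding \<delta>_def using upow_bound[OF u0 uK K1, of 2] by simp
    also have "\<dots> = 1 / real K ^ 4" using K1 by (simp add: powr_neg_numeral)
    also have "\<dots> \<le> 1 / 3 ^ 4" using K3 by (intro divide_left_mono power_mono) auto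
    finally show ?thesis by simp
  qed
  have \<eta>0: "0 < \<eta>" using \<delta>0 K1 by (simp add: \<eta>_def)
  have \<eta>2K: "real (2 * K) * \<eta> \<le> 1/2" using \<delta>1 K1 by (simp add: \<eta>_def)
  have \<eta>h: "\<eta> \<le> 1/4"
  proof -
    have "\<eta> * 4 \<le> \<eta> * real (2 * K)" using K3 \<eta>0 by (intro mult_left_mono) auto
    thus ?thesis using \<eta>2K by (simp add: algebra_simps)
  qed
  have u34: "u powr (3/4) \<le> 1/9"
  proof -
    have "u powr (3/4) = u powr ((3 * real K / 4) / real K)" using K1 by simp
    also have "\<dots> \<le> real K powr (- 2 * (3 * real K / 4))" using u0 uK K1 by (intro upow_bound) auto
    also have "\<dots> \<le> real K powr (- 2)" using K3 by (intro powr_mono) auto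
    also have "\<dots> = 1 / real K ^ 2" using K1 by (simp add: powr_neg_numeral)
    also have "\<dots> \<le> 1 / 3 ^ 2" using K3 by (intro divide_left_mono power_mono) auto
    finally show ?thesis by simp
  qed
  have usplit: "u powr (3/4 + 2 / real K) = u powr (3/4) * \<delta>" using u0 by (simp add: \<delta>_def powr_add)
  have us: "2 * u powr (3/4 + 2 / real K) \<le> 1/2"
  proof -
    have "u powr (3/4) * \<delta> \<le> 1/9 * 1" using u34 \<delta>1 \<delta>0 u0 by (intro mult_mono) auto
    thus ?thesis unfolding usplit by simp
  qed
  have bt: "24 * real K ^ 2 * real (n - 2) * u powr (3/4) \<le> 1"
    by (rule bound_total[OF u0 uK K3 nK n2])
  have zbounds: "(1 - \<eta>) * r * \<rho> \<le> cmod z \<and> cmod z \<le> (1 + \<eta>) * r * \<rho>" if z: "z \<in> cball c R" for z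
  proof -
    have dz: "cmod (z - c) \<le> R" using z by (simp add: dist_norm norm_minus_commute)
    have "cmod c - cmod (z - c) \<le> cmod z" using norm_triangle_ineq2[of c "c - z"] by (simp add: norm_minus_commute)
    moreover have "cmod z \<le> cmod c + cmod (z - c)" using norm_triangle_ineq[of c "z - c"] by simp
    ultimately show ?thesis using dz unfolding cn R_def by (simp add: algebra_simps)
  qed
  have ebound: "(\<forall>k\<in>{1..n-1}-{i}. z ^ DD d k \<noteq> a k ^ DD d k) \<and> cmod (Err n d a i z) \<le> 2/3 * \<eta>"
    if z: "z \<in> cball c R" for z
  proof -
    have zl: "(1 - \<eta>) * r * cmod (a i) \<le> cmod z" and zu: "cmod z \<le> (1 + \<eta>) * r * cmod (a i)"
      using zbounds[OF z] by (auto simp: \<rho>_def)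
    note eb = err_bound[OF n2 dge K1 u0 uK u1 apos arel i r0 rK1 rK2 _ \<eta>2K zl zu us]
    have "cmod (Err n d a i z) \<le> real (n - 2) * (real (2 * K) * (4 * u powr (3/4 + 2 / real K)))"
      using eb(2) \<eta>0 by simp
    also have "\<dots> = (24 * real K ^ 2 * real (n - 2) * u powr (3/4)) * (\<delta> / (3 * real K))"
      unfolding usplit using K1 by (simp add: field_simps power2_eq_square)
    also have "\<dots> \<le> 1 * (\<delta> / (3 * real K))" using bt \<delta>0 K1 by (intro mult_right_mono) auto
    also have "\<dots> = 2/3 * \<eta>" by (simp add: \<eta>_def)
    finally show ?thesis using eb(1) \<eta>0 by simp
  qed
  define w where "w z = Err n d a i z * (z ^ D - A) / (of_nat (d i) * A)" for z
  have wbound: "cmod (w z) \<le> \<eta>" if z: "z \<in> cball c R" for z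
  proof -
    have zu: "cmod z \<le> (1 + \<eta>) * r * \<rho>" using zbounds[OF z] by simp
    have P0: "0 < \<rho> ^ D" using \<rho>0 by simp
    have DK: "real D \<le> real (2 * K)" using di by (simp add: D_def DD_def)
    have "real D * \<eta> \<le> real (2 * K) * \<eta>" using DK \<eta>0 by (intro mult_right_mono) auto
    hence h2: "(1 + \<eta>) ^ D \<le> 2" by (intro h_bounds(2)[OF _ order_trans[OF _ \<eta>2K]]) (use \<eta>0 \<eta>h in auto)
    have "cmod (z ^ D - A) \<le> cmod z ^ D + \<rho> ^ D"
      using norm_triangle_ineq4[of "z ^ D" A] by (simp add: norm_power A_def \<rho>_def)
    also have "cmod z ^ D \<le> ((1 + \<eta>) * r * \<rho>) ^ D" using zu by (intro power_mono) auto
    also have "((1 + \<eta>) * r * \<rho>) ^ D = (1 + \<eta>) ^ D * r ^ D * \<rho> ^ D" by (simp add: power_mult_distrib)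
    also have "\<dots> \<le> 2 * r ^ D * \<rho> ^ D" using h2 r0 \<rho>0 by (intro mult_right_mono) auto
    finally have zA: "cmod (z ^ D - A) \<le> (2 * (real (d i) / real (d (Suc i))) + 1) * \<rho> ^ D"
      unfolding rD by (simp add: algebra_simps)
    have eqq: "(2 * (real (d i) / real (d (Suc i))) + 1) / real (d i) = 2 / real (d (Suc i)) + 1 / real (d i)"
      using di by (simp add: field_simps)
    have "cmod (w z) = cmod (Err n d a i z) * cmod (z ^ D - A) / (real (d i) * \<rho> ^ D)"
      unfolding w_def by (simp add: norm_mult norm_divide norm_power A_def \<rho>_def)
    also have "\<dots> \<le> cmod (Err n d a i z) * ((2 * (real (d i) / real (d (Suc i))) + 1) * \<rho> ^ D) / (real (d i) * \<rho> ^ D)"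
      using zA di P0 by (intro divide_right_mono mult_left_mono) auto
    also have "\<dots> = cmod (Err n d a i z) * ((2 * (real (d i) / real (d (Suc i))) + 1) / real (d i))"
      using P0 \<rho>0 by simp
    also have "cmod (Err n d a i z) * ((2 * (real (d i) / real (d (Suc i))) + 1) / real (d i))
        = cmod (Err n d a i z) * (2 / real (d (Suc i)) + 1 / real (d i))" by (simp only: eqq)
    also have "\<dots> \<le> (2/3 * \<eta>) * (3/2)"
    proof (rule mult_mono)
      show "cmod (Err n d a i z) \<le> 2/3 * \<eta>" using ebound[OF z] by simp
      have "2 / real (d (Suc i)) \<le> 1" using di by simp
      moreover have "1 / real (d i) \<le> 1/2" using di by simp
      ultimately show "2 / real (d (Suc i)) + 1 / real (d i) \<le> 3/2" by simp
    qed (use \<eta>0 in auto)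
    finally show ?thesis by simp
  qed
  define G where "G z = c * exp (Ln (1 + w z) / of_nat D)" for z
  have Re_pos: "0 < Re (1 + w z)" if z: "z \<in> cball c R" for z
  proof -
    have "- Re (w z) \<le> cmod (w z)" using abs_Re_le_cmod[of "w z"] by linarith
    thus ?thesis using wbound[OF z] \<eta>h by simp
  qed
  have Gmap: "cmod (G z - c) \<le> cmod c * cmod (w z)" if z: "z \<in> cball c R" for z
  proof -
    have wz: "cmod (w z) < 1/2" using wbound[OF z] \<eta>h by simp
    have Ln: "cmod (Ln (1 + w z)) \<le> 2 * cmod (w z)" by (rule norm_Ln_le[OF wz])
    have LD: "cmod (Ln (1 + w z) / of_nat D) \<le> cmod (w z) / 2"
    proof -
      have "cmod (Ln (1 + w z) / of_nat D) = cmod (Ln (1 + w z)) / real D" by (simp add: norm_divide)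
      also have "\<dots> \<le> 2 * cmod (w z) / 4" using Ln D4 by (intro frac_le) auto
      finally show ?thesis by simp
    qed
    have "cmod (G z - c) = cmod c * cmod (exp (Ln (1 + w z) / of_nat D) - 1)"
    proof -
      have "G z - c = c * (exp (Ln (1 + w z) / of_nat D) - 1)" by (simp add: G_def algebra_simps)
      thus ?thesis by (simp add: norm_mult)
    qed
    also have "\<dots> \<le> cmod c * (2 * cmod (Ln (1 + w z) / of_nat D))"
      using LD wz by (intro mult_left_mono exp_m1_bound) auto
    also have "\<dots> \<le> cmod c * cmod (w z)" using LD by (intro mult_left_mono) auto
    finally show ?thesis .
  qed
  have R0: "0 < R" using \<eta>0 r0 \<rho>0 by (simp add: R_def)
  have Gin: "G \<in> cball c R \<rightarrow> cball c R"
  proof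
    fix z assume z: "z \<in> cball c R"
    have "cmod (G z - c) \<le> cmod c * cmod (w z)" by (rule Gmap[OF z])
    also have "\<dots> \<le> cmod c * \<eta>" using wbound[OF z] by (intro mult_left_mono) auto
    also have "\<dots> = R" by (simp add: cn R_def)
    finally show "G z \<in> cball c R" by (simp add: dist_norm norm_minus_commute)
  qed
  have Gcont: "continuous_on (cball c R) G"
  proof -
    have nzl: "z ^ DD d k - a k ^ DD d k \<noteq> 0" if "z \<in> cball c R" "k \<in> {1..i-1}" for z k
      using ebound[OF that(1)] that(2) i by auto
    have nzh: "z ^ DD d k - a k ^ DD d k \<noteq> 0" if "z \<in> cball c R" "k \<in> {Suc i..n-1}" for z k
      using ebound[OF that(1)] that(2) i by auto
    have Econt: "continuous_on (cball c R) (\<lambda>z. Err n d a i z)"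
      unfolding Err_def
      apply (intro continuous_intros)
      using nzl nzh by blast+
    have wcont: "continuous_on (cball c R) w"
      unfolding w_def using A0 di by (intro continuous_intros Econt) auto
    show ?thesis unfolding G_def
    proof (intro continuous_intros wcont)
      fix z assume z: "z \<in> cball c R"
      show "1 + w z \<notin> \<real>\<^sub>\<le>\<^sub>0"
      proof
        assume "1 + w z \<in> \<real>\<^sub>\<le>\<^sub>0"
        then obtain x where x: "1 + w z = of_real x" "x \<le> 0" by (auto simp: nonpos_Reals_def)
        have "Re (1 + w z) = x" unfolding x(1) by simp
        thus False using Re_pos[OF z] x(2) by linarith
      qed
    qed (use D4 in auto)
  qed
  obtain z where zin: "z \<in> cball c R" and Gz: "G z = z"
    using brouwer_ball[OF R0 Gcont Gin] by blast
  define L where "L = Ln (1 + w z)"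
  have wz: "cmod (w z) \<le> \<eta>" by (rule wbound[OF zin])
  have zeq: "z = c * exp (L / of_nat D)" using Gz by (simp add: G_def L_def)
  have L1: "cmod L \<le> 1"
  proof -
    have "cmod L \<le> 2 * cmod (w z)" unfolding L_def by (rule norm_Ln_le) (use wz \<eta>h in auto)
    thus ?thesis using wz \<eta>h by simp
  qed
  have one_w: "1 + w z \<noteq> 0"
  proof
    assume h: "1 + w z = 0"
    have "Re (1 + w z) = 0" unfolding h by simp
    thus False using Re_pos[OF zin] by linarith
  qed
  have zD: "z ^ D = c ^ D * (1 + w z)"
  proof -
    have "exp (L / of_nat D) ^ D = exp (of_nat D * (L / of_nat D))" by (rule exp_of_nat_mult[symmetric])
    also have "of_nat D * (L / of_nat D) = L" using D4 by simp
    also have "exp L = 1 + w z" unfolding L_def using one_w by simp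
    finally show ?thesis using zeq by (simp add: power_mult_distrib)
  qed
  have Rew: "-1 < Re (w z)" using Re_pos[OF zin] by simp
  have dpos: "0 < d i" "0 < d (Suc i)" using di by auto
  note ra = root_algebra[OF dpos A0 cD zD w_def[of z] Rew]
  have eb: "\<forall>k\<in>{1..n-1}-{i}. z ^ DD d k \<noteq> a k ^ DD d k" using ebound[OF zin] by simp
  have nzall: "\<forall>k\<in>{1..n-1}. z ^ DD d k \<noteq> a k ^ DD d k"
  proof
    fix k assume "k \<in> {1..n-1}"
    thus "z ^ DD d k \<noteq> a k ^ DD d k" using eb ra(1) by (cases "k = i") (auto simp: D_def A_def)
  qed
  have crit: "crit_eq n d a z"
    unfolding crit_eq_def
  proof (intro conjI nzall)
    have "(-1) ^ (n - i) * ((\<Sum>k=1..n-1. (-1) ^ (n - k) * of_nat (DD d k) * z ^ DD d k / (z ^ DD d k - a k ^ DD d k))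
           + (-1) ^ n * of_nat (d 1))
     = of_nat (DD d i) * z ^ DD d i / (z ^ DD d i - a i ^ DD d i) - of_nat (d i) + Err n d a i z"
      by (rule decomp[OF i nzall])
    also have "\<dots> = 0" using ra(2) by (simp add: D_def A_def DD_def)
    finally show "(\<Sum>k=1..n-1. (-1) ^ (n - k) * of_nat (DD d k) * z ^ DD d k / (z ^ DD d k - a k ^ DD d k))
           + (-1) ^ n * of_nat (d 1) = 0" by simp
  qed
  have zb: "(1 - \<eta>) * r * \<rho> \<le> cmod z" "cmod z \<le> (1 + \<eta>) * r * \<rho>" using zbounds[OF zin] by auto
  have dist: "cmod (z - c) < \<delta> * \<rho>"
  proof -
    have "cmod (z - c) \<le> R" using zin by (simp add: dist_norm norm_minus_commute)
    also have "R = (\<delta> * (r / (2 * real K))) * \<rho>" by (simp add: R_def \<eta>_def)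
    also have "\<dots> < \<delta> * \<rho>"
    proof -
      have "real K powr (1/4) \<le> real K powr 1" using K1 by (intro powr_mono) auto
      hence "r \<le> real K" using rK2 K1 by simp
      hence "r / (2 * real K) < 1" using K1 by (simp add: field_simps)
      hence "\<delta> * (r / (2 * real K)) < \<delta> * 1" using \<delta>0 by (intro mult_strict_left_mono) auto
      from mult_strict_right_mono[OF this \<rho>0] show ?thesis by simp
    qed
    finally show ?thesis .
  qed
  have zlow: "real K powr (-1/4) / 2 * \<rho> \<le> cmod z"
  proof -
    have "real K powr (-1/4) / 2 * \<rho> \<le> (1 - \<eta>) * r * \<rho>"
    proof (rule mult_right_mono)
      have "real K powr (-1/4) / 2 \<le> r / 2" using rK1 by simp
      also have "\<dots> \<le> (1 - \<eta>) * r"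
      proof -
        have "\<eta> * r \<le> 1/4 * r" using \<eta>h r0 by (intro mult_right_mono) auto
        moreover have "(1 - \<eta>) * r = r - \<eta> * r" by (simp add: algebra_simps)
        ultimately show ?thesis using r0 by linarith
      qed
      finally show "real K powr (-1/4) / 2 \<le> (1 - \<eta>) * r" .
    qed (use \<rho>0 in auto)
    thus ?thesis using zb by simp
  qed
  have zup: "cmod z \<le> 2 * real K powr (1/4) * \<rho>"
  proof -
    have "(1 + \<eta>) * r * \<rho> \<le> 2 * real K powr (1/4) * \<rho>"
      using \<eta>h rK2 r0 \<rho>0 by (intro mult_right_mono mult_mono) auto
    thus ?thesis using zb by simp
  qed
  have z0: "z \<noteq> 0"
  proof -
    have "0 < real K powr (-1/4) / 2 * \<rho>" using K1 \<rho>0 by simp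
    thus ?thesis using zlow by auto
  qed
  show ?thesis
    using z0 crit dist zlow zup zeq L1 unfolding \<rho>_def \<delta>_def D_def by blast
qed



lemma same_i:
  fixes b L1 L2 :: complex and D j1 j2 :: nat
  assumes D: "0 < D" and b: "b \<noteq> 0" and j: "1 \<le> j1" "j1 \<le> D" "1 \<le> j2" "j2 \<le> D"
    and L: "cmod L1 \<le> 1" "cmod L2 \<le> 1"
    and eq: "b * exp (complex_of_real pi * \<i> * of_real ((2 * real j1 - 1) / real D)) * exp (L1 / of_nat D)
           = b * exp (complex_of_real pi * \<i> * of_real ((2 * real j2 - 1) / real D)) * exp (L2 / of_nat D)"
  shows "j1 = j2"
proof -
  define x1 where "x1 = complex_of_real pi * \<i> * of_real ((2 * real j1 - 1) / real D) + L1 / of_nat D"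
  define x2 where "x2 = complex_of_real pi * \<i> * of_real ((2 * real j2 - 1) / real D) + L2 / of_nat D"
  have "exp x1 = exp x2" using eq b by (simp add: x1_def x2_def exp_add mult.assoc)
  hence "exp (x1 - x2) = 1" by (simp add: exp_diff)
  then obtain m :: int where m: "Im (x1 - x2) = of_int (2 * m) * pi" unfolding exp_eq_1 by blast
  have Imx: "Im (x1 - x2) = pi * ((2 * real j1 - 1) / real D) + Im L1 / real D
      - (pi * ((2 * real j2 - 1) / real D) + Im L2 / real D)"
    unfolding x1_def x2_def by (simp add: Im_divide_of_nat)
  also have "\<dots> = (2 * pi * (real j1 - real j2) + (Im L1 - Im L2)) / real D"
    by (simp add: divide_simps algebra_simps)
  finally have Imx2: "Im (x1 - x2) = (2 * pi * (real j1 - real j2) + (Im L1 - Im L2)) / real D" .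
  have "2 * pi * (real j1 - real j2) + (Im L1 - Im L2) = of_int (2 * m) * pi * real D"
    using m Imx2 D by (simp add: divide_eq_eq)
  hence key: "Im L1 - Im L2 = 2 * pi * (real_of_int m * real D - (real j1 - real j2))"
    by (simp add: algebra_simps)
  define t where "t = real_of_int m * real D - (real j1 - real j2)"
  have "\<bar>Im L1 - Im L2\<bar> \<le> 2" using abs_Im_le_cmod[of L1] abs_Im_le_cmod[of L2] L by linarith
  hence "2 * pi * \<bar>t\<bar> \<le> 2" unfolding key t_def[symmetric] by (simp add: abs_mult)
  hence "\<bar>t\<bar> * pi \<le> 1" by (simp add: algebra_simps)
  moreover have "\<bar>t\<bar> * 1 \<le> \<bar>t\<bar> * pi" using pi_gt3 by (intro mult_left_mono) auto
  ultimately have "\<bar>t\<bar> \<le> 1 / pi" using pi_gt_zero by (simp add: pos_le_divide_eq)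
  moreover have "1 / pi < 1" using pi_gt3 by simp
  ultimately have "\<bar>real_of_int m * real D - (real j1 - real j2)\<bar> < 1" unfolding t_def by linarith
  hence "\<bar>of_int (m * int D - (int j1 - int j2))\<bar> < (1::real)" by simp
  hence t0: "m * int D - (int j1 - int j2) = 0" by linarith
  have "m = 0"
  proof (rule ccontr)
    assume "m \<noteq> 0"
    hence "\<bar>m\<bar> \<ge> 1" by simp
    hence "\<bar>m * int D\<bar> \<ge> int D" using D by (simp add: abs_mult)
    moreover have "\<bar>int j1 - int j2\<bar> < int D" using j by auto
    ultimately show False using t0 by simp
  qed
  thus ?thesis using t0 by simp
qed

lemma sep:
  fixes K :: nat assumes K3: "3 \<le> K"
  shows "2 * real K powr (1/4) * real K powr (-2) < real K powr (-1/4) / 2"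
proof -
  have K0: "0 < real K" using K3 by simp
  have "real K powr (3/2) \<ge> 3 powr (3/2)" using K3 by (intro powr_mono2) auto
  moreover have "3 powr (3/2) = 3 * sqrt 3"
  proof -
    have "(3::real) powr (3/2) = 3 powr (1 + 1/2)" by simp
    also have "\<dots> = 3 powr 1 * 3 powr (1/2)" by (rule powr_add)
    also have "\<dots> = 3 * sqrt 3" by (simp add: powr_half_sqrt)
    finally show ?thesis .
  qed
  moreover have "sqrt 3 > 4/3" by (rule real_less_rsqrt) (simp add: power2_eq_square)
  ultimately have h: "real K powr (3/2) > 4" by simp
  have X: "0 < real K powr (-7/4)" using K0 by simp
  have "2 * real K powr (1/4) * real K powr (-2) = 2 * real K powr (-7/4)"
    using K0 by (simp add: powr_add[symmetric])
  also have "\<dots> < real K powr (3/2) * real K powr (-7/4) / 2"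
    using h X by simp
  also have "real K powr (3/2) * real K powr (-7/4) = real K powr (-1/4)"
    using K0 by (simp add: powr_add[symmetric])
  finally show ?thesis .
qed

lemma core:
  fixes n K :: nat and d :: "nat \<Rightarrow> nat" and a :: "nat \<Rightarrow> complex" and u :: real
  assumes n2: "2 \<le> n" and dge: "\<forall>i\<in>{1..n}. 2 \<le> d i \<and> d i \<le> K" and nK: "n < K" and K3: "3 \<le> K"
    and u0: "0 < u" and uK: "u \<le> real K powr (- 2 * real K)"
    and alast: "0 < cmod (a (n - 1))"
    and arel: "\<forall>i\<in>{1..n-2}. cmod (a i) = u powr (1 / real (d (Suc i))) * cmod (a (Suc i))"
  shows "\<exists>w :: nat \<times> nat \<Rightarrow> complex.
     (\<forall>i\<in>{1..n-1}. \<forall>j\<in>{1..DD d i}.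
        w (i, j) \<noteq> 0 \<and> crit_eq n d a (w (i, j)) \<and>
        cmod (w (i, j) -
              complex_of_real ((real (d i) / real (d (Suc i))) powr (1 / real (DD d i))) * a i
              * exp (complex_of_real pi * \<i> * of_real ((2 * real j - 1) / real (DD d i))))
          < u powr (2 / real K) * cmod (a i))
     \<and> inj_on w {(i, j). i \<in> {1..n-1} \<and> j \<in> {1..DD d i}}"
proof -
  define S where "S = {(i, j). i \<in> {1..n-1} \<and> j \<in> {1..DD d i}}"
  define c where "c i j = complex_of_real ((real (d i) / real (d (Suc i))) powr (1 / real (DD d i))) * a i
              * exp (complex_of_real pi * \<i> * of_real ((2 * real j - 1) / real (DD d i)))" for i j
  define P where "P i j z \<longleftrightarrow> z \<noteq> 0 \<and> crit_eq n d a z \<and> cmod (z - c i j) < u powr (2 / real K) * cmod (a i)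
     \<and> real K powr (-1/4) / 2 * cmod (a i) \<le> cmod z \<and> cmod z \<le> 2 * real K powr (1/4) * cmod (a i)
     \<and> (\<exists>L. z = c i j * exp (L / of_nat (DD d i)) \<and> cmod L \<le> 1)" for i j z
  have K1: "1 \<le> K" using K3 by simp
  have u1: "u \<le> 1"
  proof -
    have g1: "1 \<le> real K powr (2 * real K)" using K1 by (intro ge_one_powr_ge_zero) auto
    have "real K powr (- 2 * real K) = inverse (real K powr (2 * real K))"
      by (simp add: powr_minus[symmetric])
    also have "\<dots> \<le> 1" using g1 by (metis inverse_1 le_imp_inverse_le zero_less_one)
    finally show ?thesis using uK by linarith
  qed
  have apos: "\<forall>k\<in>{1..n-1}. 0 < cmod (a k)"
    using rho_pos[OF u0 alast arel] by auto
  have ex: "\<forall>p\<in>S. \<exists>z. P (fst p) (snd p) z"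
  proof
    fix p assume "p \<in> S"
    then obtain i j where p: "p = (i, j)" and i: "1 \<le> i" "i \<le> n - 1" and j: "1 \<le> j" "j \<le> DD d i"
      unfolding S_def by auto
    have ex0: "\<exists>z L. z \<noteq> 0 \<and> crit_eq n d a z \<and> cmod (z - c i j) < u powr (2 / real K) * cmod (a i)
     \<and> real K powr (-1/4) / 2 * cmod (a i) \<le> cmod z \<and> cmod z \<le> 2 * real K powr (1/4) * cmod (a i)
     \<and> z = c i j * exp (L / of_nat (DD d i)) \<and> cmod L \<le> 1"
      unfolding c_def by (rule root_exists[OF n2 dge nK K3 u0 uK apos arel i j])
    then obtain z L where h1: "z \<noteq> 0" and h2: "crit_eq n d a z"
      and h3: "cmod (z - c i j) < u powr (2 / real K) * cmod (a i)"
      and h4: "real K powr (-1/4) / 2 * cmod (a i) \<le> cmod z"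
      and h5: "cmod z \<le> 2 * real K powr (1/4) * cmod (a i)"
      and h6: "z = c i j * exp (L / of_nat (DD d i))" and h7: "cmod L \<le> 1"
      by (elim exE conjE)
    have "P i j z" unfolding P_def using h1 h2 h3 h4 h5 h6 h7 by blast
    thus "\<exists>z. P (fst p) (snd p) z" unfolding p by auto
  qed
  from bchoice[OF ex] obtain w where w: "\<forall>p\<in>S. P (fst p) (snd p) (w p)" by blast
  have wP: "P i j (w (i, j))" if "i \<in> {1..n-1}" "j \<in> {1..DD d i}" for i j
    using w that unfolding S_def by auto
  have inj: "inj_on w S"
  proof (rule inj_onI)
    fix p q assume p: "p \<in> S" and q: "q \<in> S" and eq: "w p = w q"
    obtain i1 j1 where p': "p = (i1, j1)" and i1: "i1 \<in> {1..n-1}" and j1: "j1 \<in> {1..DD d i1}"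
      using p unfolding S_def by auto
    obtain i2 j2 where q': "q = (i2, j2)" and i2: "i2 \<in> {1..n-1}" and j2: "j2 \<in> {1..DD d i2}"
      using q unfolding S_def by auto
    have P1: "P i1 j1 (w p)" using wP[OF i1 j1] p' by simp
    have P2: "P i2 j2 (w p)" using wP[OF i2 j2] q' eq by simp
    have neq: False if lt: "ia < ib" and Pa: "P ia ja z" and Pb: "P ib jb z"
      and ia: "ia \<in> {1..n-1}" and ib: "ib \<in> {1..n-1}" for ia ib ja jb z
    proof -
      have za: "cmod z \<le> 2 * real K powr (1/4) * cmod (a ia)" using Pa unfolding P_def by blast
      have zb: "real K powr (-1/4) / 2 * cmod (a ib) \<le> cmod z" using Pb unfolding P_def by blast
      have ia1: "ia \<in> {1..n-2}" using lt ia ib by auto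
      have "cmod (a ia) = u powr (1 / real (d (Suc ia))) * cmod (a (Suc ia))" using arel ia1 by blast
      also have "\<dots> \<le> real K powr (-2) * cmod (a ib)"
      proof (rule mult_mono)
        have dk: "d (Suc ia) \<le> K" "2 \<le> d (Suc ia)" using dge ia1 by auto
        have "u powr (1 / real (d (Suc ia))) \<le> u powr (1 / real K)"
          using u0 u1 dk by (intro powr_mono') (auto simp: frac_le)
        also have "\<dots> \<le> real K powr (- 2 * 1)" using upow_bound[OF u0 uK K1, of 1] by simp
        finally show "u powr (1 / real (d (Suc ia))) \<le> real K powr (-2)" by simp
        show "cmod (a (Suc ia)) \<le> cmod (a ib)"
          using lt ia ib by (intro rho_mono[OF u0 u1 arel]) auto
      qed auto
      finally have ab: "cmod (a ia) \<le> real K powr (-2) * cmod (a ib)" .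
      have "cmod z \<le> 2 * real K powr (1/4) * (real K powr (-2) * cmod (a ib))"
        by (rule order_trans[OF za mult_left_mono[OF ab]]) simp
      also have "\<dots> = (2 * real K powr (1/4) * real K powr (-2)) * cmod (a ib)" by simp
      also have "\<dots> < (real K powr (-1/4) / 2) * cmod (a ib)"
        using sep[OF K3] apos ib by (intro mult_strict_right_mono) auto
      finally show False using zb by simp
    qed
    have ieq: "i1 = i2"
    proof (rule ccontr)
      assume "i1 \<noteq> i2"
      hence "i1 < i2 \<or> i2 < i1" by auto
      thus False
      proof
        assume "i1 < i2" thus False using neq[OF _ P1 P2 i1 i2] by blast
      next
        assume "i2 < i1" thus False using neq[OF _ P2 P1 i2 i1] by blast
      qed
    qed
    obtain L1 where L1: "w p = c i1 j1 * exp (L1 / of_nat (DD d i1))" "cmod L1 \<le> 1"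
      using P1 unfolding P_def by blast
    obtain L2 where L2: "w p = c i2 j2 * exp (L2 / of_nat (DD d i2))" "cmod L2 \<le> 1"
      using P2 unfolding P_def by blast
    define b where "b = complex_of_real ((real (d i1) / real (d (Suc i1))) powr (1 / real (DD d i1))) * a i1"
    have dd: "2 \<le> d i1" "2 \<le> d (Suc i1)" using dge i1 by auto
    have b0: "b \<noteq> 0" unfolding b_def using apos i1 dd by auto
    have D0: "0 < DD d i1" using dd by (simp add: DD_def)
    have "j1 = j2"
      by (rule same_i[OF D0 b0 _ _ _ _ L1(2) L2(2)])
         (use j1 j2 ieq L1(1) L2(1) in \<open>auto simp: b_def c_def\<close>)
    thus "p = q" using p' q' ieq by simp
  qed
  show ?thesis
  proof (intro exI conjI)
    show "inj_on w {(i, j). i \<in> {1..n-1} \<and> j \<in> {1..DD d i}}" using inj unfolding S_def .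
    show "\<forall>i\<in>{1..n-1}. \<forall>j\<in>{1..DD d i}.
        w (i, j) \<noteq> 0 \<and> crit_eq n d a (w (i, j)) \<and>
        cmod (w (i, j) -
              complex_of_real ((real (d i) / real (d (Suc i))) powr (1 / real (DD d i))) * a i
              * exp (complex_of_real pi * \<i> * of_real ((2 * real j - 1) / real (DD d i))))
          < u powr (2 / real K) * cmod (a i)"
      using wP unfolding P_def c_def by blast
  qed
qed



theorem lemma2p3:
  fixes p n :: nat and d :: "nat \<Rightarrow> nat" and a :: "nat \<Rightarrow> complex"
    and s u v \<xi> :: real and K :: nat
  assumes hp: "p \<in> {0, 1}"
    and hn: "n \<ge> 2"
    and hd: "\<forall>i\<in>{1..n}. d i > 0"
    and hxi: "\<xi> = (\<Sum>i=1..n. 1 / real (d i))"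
    and hxi1: "\<xi> < 1"
    and hK: "K = Max (d ` {1..n})"
    and hp1: "p = 1 \<Longrightarrow>
        0 < s \<and> s \<le> min (real K powr (- 5 * \<xi> / (1 - \<xi>))) (real K powr (5 - 2 * real K))
        \<and> u = s * real K powr (-5) \<and> v = s * real K powr (-2)"
    and hp0: "p = 0 \<Longrightarrow>
        0 < s \<and> s \<le> min (min
           (2 powr (- (1 / (1 - \<xi>)) * (1 / (1 + 1 / real (d n) - 2 * \<xi> / 3))))
           ((4 * real K) powr (- 3 / (1 - \<xi>))))
           (real K powr (- 2 * real K / (1 + 1 / real (d n) + 2 * (1 - \<xi>) / 3)))
        \<and> u = s powr (1 + 1 / real (d n) + 2 * (1 - \<xi>) / 3)
        \<and> v = s powr (1 / real (d n) + (1 - \<xi>) / 3)"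
    and ha_last: "cmod (a (n - 1)) = v powr (1 / real (d n))"
    and ha: "\<forall>i\<in>{1..n-2}. cmod (a i) = u powr (1 / real (d (Suc i))) * cmod (a (Suc i))"
  shows "\<exists>w :: nat \<times> nat \<Rightarrow> complex.
     (\<forall>i\<in>{1..n-1}. \<forall>j\<in>{1..DD d i}.
        w (i, j) \<noteq> 0 \<and> crit_eq n d a (w (i, j)) \<and>
        cmod (w (i, j) -
              complex_of_real ((real (d i) / real (d (Suc i))) powr (1 / real (DD d i))) * a i
              * exp (complex_of_real pi * \<i> * of_real ((2 * real j - 1) / real (DD d i))))
          < u powr (2 / real K) * cmod (a i))
     \<and> inj_on w {(i, j). i \<in> {1..n-1} \<and> j \<in> {1..DD d i}}"
proof -
  have dle: "d i \<le> K" if "i \<in> {1..n}" for i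
    unfolding hK using that by (intro Max_ge) auto
  have d2: "2 \<le> d i" if i: "i \<in> {1..n}" for i
  proof -
    have "1 / real (d i) \<le> \<xi>" unfolding hxi
      by (rule member_le_sum[OF i]) auto
    hence "1 / real (d i) < 1" using hxi1 by simp
    moreover have "0 < d i" using hd i by auto
    ultimately show ?thesis by (simp add: divide_less_eq)
  qed
  have dge: "\<forall>i\<in>{1..n}. 2 \<le> d i \<and> d i \<le> K" using d2 dle by auto
  have K2: "2 \<le> K" using dge hn by (meson atLeastAtMost_iff le_trans one_le_numeral order_trans one_le_numeral)
  have nK: "n < K"
  proof -
    have "(\<Sum>i=1..n. 1 / real K) \<le> \<xi>" unfolding hxi
    proof (intro sum_mono)
      fix i assume i: "i \<in> {1..n}"
      hence di: "2 \<le> d i" "d i \<le> K" using dge by auto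
      hence "0 < real K * real (d i)" by simp
      thus "1 / real K \<le> 1 / real (d i)" using di by (intro divide_left_mono) auto
    qed
    hence "real n / real K < 1" using hxi1 by simp
    thus ?thesis using K2 by (simp add: divide_less_eq)
  qed
  have K3: "3 \<le> K" using nK hn by simp
  have Kpos: "0 < real K" using K3 by simp
  have uv: "0 < u \<and> u \<le> real K powr (- 2 * real K) \<and> 0 < v"
  proof (cases "p = 1")
    case True
    note h = hp1[OF True]
    have hs: "s \<le> real K powr (5 - 2 * real K)" using h by simp
    have hu: "u = s * real K powr (-5)" using h by simp
    have "u \<le> real K powr (5 - 2 * real K) * real K powr (-5)"
      unfolding hu by (rule mult_right_mono[OF hs]) simp
    also have "\<dots> = real K powr (- 2 * real K)" using Kpos by (simp add: powr_add[symmetric])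
    finally show ?thesis using h Kpos by simp
  next
    case False
    hence p0: "p = 0" using hp by auto
    note h = hp0[OF p0]
    define e where "e = 1 + 1 / real (d n) + 2 * (1 - \<xi>) / 3"
    have e0: "0 < e" unfolding e_def using hxi1 by (simp add: add_pos_nonneg)
    have s0: "0 < s" using h by simp
    have sle: "s \<le> real K powr (- 2 * real K / e)" using h unfolding e_def by simp
    have "u = s powr e" using h unfolding e_def by simp
    also have "\<dots> \<le> (real K powr (- 2 * real K / e)) powr e" using s0 sle e0 by (intro powr_mono2) auto
    also have "\<dots> = real K powr (- 2 * real K)" using e0 by (simp add: powr_powr)
    finally show ?thesis using h s0 e0 unfolding e_def by simp
  qed
  have alast: "0 < cmod (a (n - 1))" using ha_last uv by simp
  show ?thesis
    by (rule core[OF hn dge nK K3 _ _ alast ha]) (use uv in auto)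
qed


end
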